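(* Suppose $f$ is $L_f$-smooth and $\mu_f$-strongly convex, $L_{\mathbf S}^{\max}<\infty$, and let $x^\star_{\mathcal D}$ be the minimizer of $\tilde f$. Let $0<\gamma\le 1/(L_fL_{\mathbf S}^{\max})$ and let $(x^t)$ be generated by the Double Sketched GD iteration. Then for every $T\ge 0$, $$\mathbb E\|x^T-x^\star_{\mathcal D}\|^2\le(1-\gamma\mu_{\mathcal D}\mu_f)^T\|x^0-x^\star_{\mathcal D}\|^2+\frac{2\gamma L_fL_{\mathbf S}^{\max}}{\mu_f\mu_{\mathcal D}}\big(\tilde f^{\inf}-f^{\inf}\big).$$
   Context: Let $f:\mathbb R^d\to\mathbb R$, fix $s\in\mathbb R^d$, and let $\mathcal D$ be a distribution of random matrices $\mathbf S\in\mathbb R^{d\times d}$ with $\mathbb E[\mathbf S]=I$ and $\mathbb E[\mathbf S^\top\mathbf S]$ finite. Define $f_{\mathbf S}(x)=f(s+\mathbf S(x-s))$, $\tilde f(x)=\mathbb E_{\mathbf S\sim\mathcal D}[f_{\mathbf S}(x)]$, $\tilde f^{\inf}=\inf_x\tilde f(x)$, $\mu_{\mathcal D}=\lambda_{\min}(\mathbb E[\mathbf S^\top\mathbf S])$, and $L_{\mathbf S}^{\max}$ the smallest constant with $\lambda_{\max}(\mathbf S^\top\mathbf S)\le L_{\mathbf S}^{\max}$ a.s. Double Sketched GD: given $x^0\in\mathbb R^d$, for $t\ge0$ draw $\mathbf S^t\sim\mathcal D$ independently of the past and set $x^{t+1}=x^t-\gamma(\mathbf S^t)^\top\nabla f(s+\mathbf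 S^t(x^t-s))$. $f$ is $L_f$-smooth if differentiable, $f(x+h)\le f(x)+\langle\nabla f(x),h\rangle+\frac{L_f}{2}\|h\|^2$ for all $x,h$, and bounded below by $f^{\inf}$; $\mu_f$-strongly convex if $f(x+h)\ge f(x)+\langle\nabla f(x),h\rangle+\frac{\mu_f}{2}\|h\|^2$ for all $x,h$. *)

theory Defs
  imports "HOL-Probability.Probability"
begin

type_synonym 'n vec = "real ^ 'n"
type_synonym 'n mat = "real ^ 'n ^ 'n"

text \<open>Real eigenvalues of a square matrix, and the largest / smallest one
  (used only for symmetric matrices, where the spectrum is real, finite and nonempty).\<close>
definition eigvals :: "('n::finite) mat \<Rightarrow> real set" where
  "eigvals A = {l. \<exists>v::'n vec. v \<noteq> 0 \<and> A *v v = l *\<^sub>R v}"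

definition lambda_max :: "('n::finite) mat \<Rightarrow> real" where
  "lambda_max A = Max (eigvals A)"

definition lambda_min :: "('n::finite) mat \<Rightarrow> real" where
  "lambda_min A = Min (eigvals A)"

definition L_smooth :: "real \<Rightarrow> (('n::finite) vec \<Rightarrow> real) \<Rightarrow> ('n vec \<Rightarrow> 'n vec) \<Rightarrow> bool" where
  "L_smooth L f g \<longleftrightarrow>
     (\<forall>x. (f has_derivative (\<lambda>h. g x \<bullet> h)) (at x)) \<and>
     (\<forall>x h. f (x + h) \<le> f x + g x \<bullet> h + L / 2 * (norm h)\<^sup>2) \<and>
     bdd_below (range f)"

definition strongly_convex :: "real \<Rightarrow> (('n::finite) vec \<Rightarrow> real) \<Rightarrow> ('n vec \<Rightarrow> 'n vec) \<Rightarrow> bool" where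
  "strongly_convex mu f g \<longleftrightarrow> mu > 0 \<and>
     (\<forall>x h. f (x + h) \<ge> f x + g x \<bullet> h + mu / 2 * (norm h)\<^sup>2)"

definition f_sk :: "(('n::finite) vec \<Rightarrow> real) \<Rightarrow> 'n vec \<Rightarrow> 'n mat \<Rightarrow> 'n vec \<Rightarrow> real" where
  "f_sk f s S x = f (s + S *v (x - s))"

definition f_tilde :: "'n mat measure \<Rightarrow> (('n::finite) vec \<Rightarrow> real) \<Rightarrow> 'n vec \<Rightarrow> 'n vec \<Rightarrow> real" where
  "f_tilde D f s x = (\<integral>S. f_sk f s S x \<partial>D)"

definition mu_D :: "('n::finite) mat measure \<Rightarrow> real" where
  "mu_D D = lambda_min (\<integral>S. transpose S ** S \<partial>D)"

definition L_S_max :: "('n::finite) mat measure \<Rightarrow> real" where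
  "L_S_max D = Inf {L. AE S in D. lambda_max (transpose S ** S) \<le> L}"

primrec dsgd :: "(('n::finite) vec \<Rightarrow> 'n vec) \<Rightarrow> real \<Rightarrow> 'n vec \<Rightarrow> 'n vec \<Rightarrow> (nat \<Rightarrow> 'n mat) \<Rightarrow> nat \<Rightarrow> 'n vec" where
  "dsgd g \<gamma> s x0 Ss 0 = x0"
| "dsgd g \<gamma> s x0 Ss (Suc t) =
     dsgd g \<gamma> s x0 Ss t - \<gamma> *\<^sub>R (transpose (Ss t) *v g (s + Ss t *v (dsgd g \<gamma> s x0 Ss t - s)))"

end

theory Submission
  imports Defs
begin


lemma transpose_dot: "(transpose A *v x) \<bullet> y = x \<bullet> ((A::real^'m^'n) *v y)"
  by (simp add: dot_lmul_matrix)

lemma psd_zero: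
  fixes B :: "real^'n \<Rightarrow> real^'n"
  assumes lin: "linear B" and sym: "\<forall>x y. B x \<bullet> y = x \<bullet> B y"
    and psd: "\<forall>x. 0 \<le> x \<bullet> B x" and v: "v \<bullet> B v = 0"
  shows "B v = 0"
proof -
  define w where "w = B v"
  define a where "a = w \<bullet> w"
  define c where "c = w \<bullet> B w"
  have c0: "0 \<le> c" using psd c_def by auto
  have a0: "0 \<le> a" using a_def by auto
  have Bt: "B (v - t *\<^sub>R w) = w - t *\<^sub>R B w" for t
    using lin unfolding w_def by (simp add: linear_diff linear_scale)
  have vBw: "v \<bullet> B w = a" using sym unfolding a_def w_def by (metis inner_commute)
  have vw: "v \<bullet> w = 0" using v unfolding w_def .
  have q: "(v - t *\<^sub>R w) \<bullet> B (v - t *\<^sub>R w) = - 2 * t * a + t^2 * c" for t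
    unfolding Bt using vBw vw unfolding a_def c_def
    by (simp add: inner_diff_left inner_diff_right power2_eq_square algebra_simps inner_commute)
  define t where "t = a / (c + 1)"
  have t0: "0 \<le> t" using a0 c0 t_def by auto
  have "0 \<le> - 2 * t * a + t^2 * c" using q[of t] psd by metis
  moreover have "t^2 * c \<le> t * a"
  proof -
    have "t * c \<le> a" using a0 c0 unfolding t_def by (simp add: field_simps)
    then have "t * (t * c) \<le> t * a" using t0 by (simp add: mult_left_mono)
    then show ?thesis by (simp add: power2_eq_square algebra_simps)
  qed
  ultimately have "t * a \<le> 0" by linarith
  then have "a * a \<le> 0" using c0 unfolding t_def by (simp add: field_simps)
  then have "a = 0" using a0 by (metis mult_nonneg_nonneg antisym mult_eq_0_iff)
  then show ?thesis unfolding a_def w_def by simp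
qed

lemma sphere_nonempty: "sphere (0::real^'n) 1 \<noteq> {}"
proof -
  obtain i :: 'n where True by auto
  then show ?thesis by (metis empty_iff mem_sphere_0 norm_axis_1)
qed

lemma quad_cont: "continuous_on S (\<lambda>x::real^'n. x \<bullet> ((A::real^'n^'n) *v x))"
  by (intro continuous_intros linear_continuous_on) (simp add: linear_conv_bounded_linear)

lemma quad_scale: "(c *\<^sub>R x) \<bullet> ((A::real^'n^'n) *v (c *\<^sub>R x)) = c^2 * (x \<bullet> (A *v x))"
  by (simp add: matrix_vector_mult_scaleR power2_eq_square)

lemma rayleigh_min:
  fixes A :: "real^'n^'n"
  assumes sym: "\<forall>x y. (A *v x) \<bullet> y = x \<bullet> (A *v y)"
  shows "\<exists>m \<in> eigvals A. \<forall>x. m * (norm x)^2 \<le> x \<bullet> (A *v x)"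
proof -
  obtain v where vS: "v \<in> sphere 0 1" and vmin: "\<forall>y\<in>sphere 0 1. v \<bullet> (A *v v) \<le> y \<bullet> (A *v y)"
    using continuous_attains_inf[OF compact_sphere sphere_nonempty quad_cont] by blast
  define m where "m = v \<bullet> (A *v v)"
  have bound: "m * (norm x)^2 \<le> x \<bullet> (A *v x)" for x
  proof (cases "x = 0")
    case True then show ?thesis by simp
  next
    case False
    define u where "u = (1 / norm x) *\<^sub>R x"
    have "u \<in> sphere 0 1" using False unfolding u_def by simp
    then have "m \<le> u \<bullet> (A *v u)" using vmin m_def by auto
    also have "\<dots> = (1/norm x)^2 * (x \<bullet> (A *v x))" unfolding u_def by (rule quad_scale)
    finally have "m * (norm x)^2 \<le> (1/norm x)^2 * (x \<bullet> (A *v x)) * (norm x)^2"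
      by (simp add: mult_right_mono)
    also have "\<dots> = x \<bullet> (A *v x)" using False by (simp add: field_simps)
    finally show ?thesis .
  qed
  define B where "B = (\<lambda>x. A *v x - m *\<^sub>R x)"
  have linB: "linear B" unfolding B_def
    by (rule linearI) (auto simp: algebra_simps matrix_vector_right_distrib matrix_vector_mult_scaleR scaleR_diff_right)
  have "B v = 0"
  proof (rule psd_zero[OF linB])
    show "\<forall>x y. B x \<bullet> y = x \<bullet> B y" using sym unfolding B_def by (simp add: inner_diff_left inner_diff_right)
    show "\<forall>x. 0 \<le> x \<bullet> B x" using bound unfolding B_def by (simp add: inner_diff_right power2_norm_eq_inner)
    show "v \<bullet> B v = 0" using vS unfolding B_def m_def by (simp add: inner_diff_right power2_norm_eq_inner[symmetric])
  qed
  then have "A *v v = m *\<^sub>R v" unfolding B_def by simp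
  moreover have "v \<noteq> 0" using vS by auto
  ultimately have "m \<in> eigvals A" unfolding eigvals_def by auto
  with bound show ?thesis by auto
qed

lemma rayleigh_max:
  fixes A :: "real^'n^'n"
  assumes sym: "\<forall>x y. (A *v x) \<bullet> y = x \<bullet> (A *v y)"
  shows "\<exists>m \<in> eigvals A. \<forall>x. x \<bullet> (A *v x) \<le> m * (norm x)^2"
proof -
  obtain v where vS: "v \<in> sphere 0 1" and vmin: "\<forall>y\<in>sphere 0 1. y \<bullet> (A *v y) \<le> v \<bullet> (A *v v)"
    using continuous_attains_sup[OF compact_sphere sphere_nonempty quad_cont] by blast
  define m where "m = v \<bullet> (A *v v)"
  have bound: "x \<bullet> (A *v x) \<le> m * (norm x)^2" for x
  proof (cases "x = 0")
    case True then show ?thesis by simp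
  next
    case False
    define u where "u = (1 / norm x) *\<^sub>R x"
    have "u \<in> sphere 0 1" using False unfolding u_def by simp
    then have "u \<bullet> (A *v u) \<le> m" using vmin m_def by auto
    moreover have "u \<bullet> (A *v u) = (1/norm x)^2 * (x \<bullet> (A *v x))" unfolding u_def by (rule quad_scale)
    ultimately have "(1/norm x)^2 * (x \<bullet> (A *v x)) * (norm x)^2 \<le> m * (norm x)^2"
      by (simp add: mult_right_mono)
    moreover have "(1/norm x)^2 * (x \<bullet> (A *v x)) * (norm x)^2 = x \<bullet> (A *v x)" using False by (simp add: field_simps)
    ultimately show ?thesis by simp
  qed
  define B where "B = (\<lambda>x. m *\<^sub>R x - A *v x)"
  have linB: "linear B" unfolding B_def
    by (rule linearI) (auto simp: algebra_simps matrix_vector_right_distrib matrix_vector_mult_scaleR scaleR_diff_right)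
  have "B v = 0"
  proof (rule psd_zero[OF linB])
    show "\<forall>x y. B x \<bullet> y = x \<bullet> B y" using sym unfolding B_def by (simp add: inner_diff_left inner_diff_right)
    show "\<forall>x. 0 \<le> x \<bullet> B x" using bound unfolding B_def by (simp add: inner_diff_right power2_norm_eq_inner)
    show "v \<bullet> B v = 0" using vS unfolding B_def m_def by (simp add: inner_diff_right power2_norm_eq_inner[symmetric])
  qed
  then have "A *v v = m *\<^sub>R v" unfolding B_def by (metis eq_iff_diff_eq_0)
  moreover have "v \<noteq> 0" using vS by auto
  ultimately have "m \<in> eigvals A" unfolding eigvals_def by auto
  with bound show ?thesis by auto
qed

lemma eigvals_finite:
  fixes A :: "real^'n^'n"
  assumes sym: "\<forall>x y. (A *v x) \<bullet> y = x \<bullet> (A *v y)"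
  shows "finite (eigvals A)"
proof -
  define u where "u = (\<lambda>l. SOME v::real^'n. v \<noteq> 0 \<and> A *v v = l *\<^sub>R v)"
  have u: "u l \<noteq> 0 \<and> A *v u l = l *\<^sub>R u l" if lE: "l \<in> eigvals A" for l
  proof -
    obtain v where "v \<noteq> 0 \<and> A *v v = l *\<^sub>R v" using lE unfolding eigvals_def by auto
    then show ?thesis unfolding u_def by (rule someI)
  qed
  have inj: "inj_on u (eigvals A)"
  proof (rule inj_onI)
    fix l k assume l: "l \<in> eigvals A" and k: "k \<in> eigvals A" and e: "u l = u k"
    then have "l *\<^sub>R u l = k *\<^sub>R u l" using u[OF l] u[OF k] by metis
    then show "l = k" using u[OF l] by (metis scaleR_cancel_right)
  qed
  have orth: "pairwise orthogonal (u ` eigvals A)"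
  proof (clarsimp simp: pairwise_def orthogonal_def)
    fix l k assume l: "l \<in> eigvals A" and k: "k \<in> eigvals A" and ne: "u l \<noteq> u k"
    then have lk: "l \<noteq> k" by auto
    have "l * (u l \<bullet> u k) = (A *v u l) \<bullet> u k" using u[OF l] by simp
    also have "\<dots> = u l \<bullet> (A *v u k)" using sym by blast
    also have "\<dots> = k * (u l \<bullet> u k)" using u[OF k] by simp
    finally show "u l \<bullet> u k = 0" using lk by auto
  qed
  have "0 \<notin> u ` eigvals A" using u by auto
  then have "independent (u ` eigvals A)" using orth pairwise_orthogonal_independent by blast
  then have "finite (u ` eigvals A)" using independent_bound by blast
  then show ?thesis using inj finite_imageD by blast
qed


lemma sym_from: "\<forall>x y. (A *v x) \<bullet> y = x \<bullet> (A *v y) \<Longrightarrow> \<forall>x y. ((A::real^'n^'n) *v x) \<bullet> y = x \<bullet> (A *v y)" by simp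

lemma lmin_le:
  fixes A :: "real^'n^'n"
  assumes sym: "\<forall>x y. (A *v x) \<bullet> y = x \<bullet> (A *v y)"
  shows "lambda_min A * (norm x)^2 \<le> x \<bullet> (A *v x)" and "lambda_min A \<in> eigvals A"
proof -
  obtain m where m: "m \<in> eigvals A" "\<forall>x. m * (norm x)^2 \<le> x \<bullet> (A *v x)" using rayleigh_min[OF sym] by blast
  have fin: "finite (eigvals A)" by (rule eigvals_finite[OF sym])
  have "lambda_min A \<le> m" unfolding lambda_min_def using fin m(1) by simp
  then have "lambda_min A * (norm x)^2 \<le> m * (norm x)^2" by (simp add: mult_right_mono)
  then show "lambda_min A * (norm x)^2 \<le> x \<bullet> (A *v x)" using m(2) by (meson order_trans)
  show "lambda_min A \<in> eigvals A" unfolding lambda_min_def using fin m(1) by (metis Min_in empty_iff)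
qed

lemma lmax_ge:
  fixes A :: "real^'n^'n"
  assumes sym: "\<forall>x y. (A *v x) \<bullet> y = x \<bullet> (A *v y)"
  shows "x \<bullet> (A *v x) \<le> lambda_max A * (norm x)^2"
proof -
  obtain m where m: "m \<in> eigvals A" "\<forall>x. x \<bullet> (A *v x) \<le> m * (norm x)^2" using rayleigh_max[OF sym] by blast
  have fin: "finite (eigvals A)" by (rule eigvals_finite[OF sym])
  have "m \<le> lambda_max A" unfolding lambda_max_def using fin m(1) by simp
  then have "m * (norm x)^2 \<le> lambda_max A * (norm x)^2" by (simp add: mult_right_mono)
  then show ?thesis using m(2) by (meson order_trans)
qed

lemma tdot2: "x \<bullet> (transpose A *v y) = ((A::real^'m^'n) *v x) \<bullet> y"
  by (metis transpose_dot inner_commute)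

lemma sym_StS: "\<forall>x y. ((transpose S ** S) *v x) \<bullet> y = x \<bullet> ((transpose S ** S) *v y)"
  for S :: "real^'n^'n"
  by (simp del: transpose_matrix_vector add: matrix_vector_mul_assoc[symmetric] transpose_dot tdot2)

lemma quad_StS: "x \<bullet> ((transpose S ** S) *v x) = (norm (S *v x))^2" for S :: "real^'n^'n"
proof -
  have "x \<bullet> ((transpose S ** S) *v x) = (transpose S *v (S *v x)) \<bullet> x"
    by (simp del: transpose_matrix_vector add: matrix_vector_mul_assoc[symmetric] inner_commute)
  also have "\<dots> = (S *v x) \<bullet> (S *v x)" by (simp del: transpose_matrix_vector add: transpose_dot)
  finally show ?thesis by (simp add: power2_norm_eq_inner)
qed

lemma lmax_StS: "(norm (S *v x))^2 \<le> lambda_max (transpose S ** S) * (norm x)^2" for S :: "real^'n^'n"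
proof -
  have "x \<bullet> ((transpose S ** S) *v x) \<le> lambda_max (transpose S ** S) * (norm x)^2" by (rule lmax_ge[OF sym_StS])
  then show ?thesis by (simp only: quad_StS)
qed

lemma lmax_StS_nonneg: "0 \<le> lambda_max (transpose S ** S)" for S :: "real^'n^'n"
proof -
  obtain i :: 'n where True by auto
  have "0 \<le> (norm (S *v axis i 1))^2" by simp
  also have "\<dots> \<le> lambda_max (transpose S ** S)" using lmax_StS[of S "axis i 1"] by simp
  finally show ?thesis .
qed

lemma linear_mv: "bounded_linear (\<lambda>A::real^'n^'m. A *v v)"
  by (subst linear_conv_bounded_linear[symmetric])
     (rule linearI, auto simp: matrix_vector_mult_add_rdistrib scaleR_matrix_vector_assoc)

lemma linear_quad: "bounded_linear (\<lambda>A::real^'n^'m. x \<bullet> (A *v y))"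
  by (subst linear_conv_bounded_linear[symmetric])
     (rule linearI, auto simp: matrix_vector_mult_add_rdistrib scaleR_matrix_vector_assoc[symmetric] inner_add_right)

locale setting =
  fixes f :: "('n::finite) vec \<Rightarrow> real" and g :: "'n vec \<Rightarrow> 'n vec"
    and s :: "'n vec" and D :: "'n mat measure" and Lf muf :: real
  assumes smooth: "L_smooth Lf f g"
    and sconv: "strongly_convex muf f g"
    and D_prob: "prob_space D" and D_sets: "sets D = sets borel"
    and ES_int: "integrable D (\<lambda>S. S)" and ES: "(\<integral>S. S \<partial>D) = mat 1"
    and ESS_int: "integrable D (\<lambda>S. transpose S ** S)"
    and Lmax_fin: "\<exists>L. AE S in D. lambda_max (transpose S ** S) \<le> L"
begin

interpretation D: prob_space D by (rule D_prob)

definition finf where "finf = Inf (range f)"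
definition Q where "Q = (\<integral>S. transpose S ** S \<partial>D)"
definition Lm where "Lm = L_S_max D"
definition muD where "muD = mu_D D"

lemma upper: "f (x + h) \<le> f x + g x \<bullet> h + Lf / 2 * (norm h)\<^sup>2"
  using smooth unfolding L_smooth_def by blast
lemma lower: "f x + g x \<bullet> h + muf / 2 * (norm h)\<^sup>2 \<le> f (x + h)"
  using sconv unfolding strongly_convex_def by blast
lemma muf_pos: "0 < muf" using sconv unfolding strongly_convex_def by blast
lemma finf_le: "finf \<le> f x"
  using smooth unfolding L_smooth_def finf_def by (auto intro: cInf_lower)

lemma muf_le_Lf: "muf \<le> Lf"
proof -
  obtain i :: 'n where True by auto
  have "f 0 + g 0 \<bullet> axis i 1 + muf / 2 * (norm (axis i (1::real)))\<^sup>2 \<le> f 0 + g 0 \<bullet> axis i 1 + Lf / 2 * (norm (axis i (1::real)))\<^sup>2"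
    using lower[of 0 "axis i 1"] upper[of 0 "axis i 1"] by linarith
  then show ?thesis by simp
qed

lemma Lf_pos: "0 < Lf" using muf_pos muf_le_Lf by linarith

lemma g_lip: "norm (g (x + h) - g x) \<le> 2 * Lf * norm h"
proof (cases "h = 0 \<or> g (x + h) - g x = 0")
  case True then show ?thesis using Lf_pos by auto
next
  case False
  define d where "d = g (x + h) - g x"
  have dk: "d \<bullet> k \<le> Lf * ((norm h)^2 + (norm k)^2)" for k
  proof -
    have 1: "f (x + h) + g (x + h) \<bullet> k \<le> f (x + h + k)"
    proof -
      have "0 \<le> muf / 2 * (norm k)\<^sup>2" using muf_pos by simp
      then show ?thesis using lower[of "x+h" k] by linarith
    qed
    have 2: "f (x + h + k) \<le> f x + g x \<bullet> (h + k) + Lf / 2 * (norm (h + k))\<^sup>2"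
      using upper[of x "h+k"] by (simp add: add.assoc)
    have 3: "f x + g x \<bullet> h \<le> f (x + h)"
    proof -
      have "0 \<le> muf / 2 * (norm h)\<^sup>2" using muf_pos by simp
      then show ?thesis using lower[of x h] by linarith
    qed
    have 4: "(norm (h + k))\<^sup>2 \<le> 2 * ((norm h)^2 + (norm k)^2)"
    proof -
      have "norm (h + k) \<le> norm h + norm k" by (rule norm_triangle_ineq)
      then have "(norm (h + k))\<^sup>2 \<le> (norm h + norm k)^2" by (simp add: power_mono)
      also have "\<dots> \<le> 2 * ((norm h)^2 + (norm k)^2)"
      proof -
        have "0 \<le> (norm h - norm k)^2" by simp
        then show ?thesis by (simp add: power2_eq_square algebra_simps)
      qed
      finally show ?thesis .
    qed
    have "d \<bullet> k \<le> Lf / 2 * (norm (h + k))\<^sup>2" using 1 2 3 unfolding d_def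
      by (simp add: inner_diff_left inner_add_right)
    also have "\<dots> \<le> Lf / 2 * (2 * ((norm h)^2 + (norm k)^2))" using 4 Lf_pos by simp
    also have "\<dots> = Lf * ((norm h)^2 + (norm k)^2)" by simp
    finally show ?thesis .
  qed
  have hn: "norm h > 0" and dn: "norm d > 0" using False d_def by auto
  define k where "k = (norm h / norm d) *\<^sub>R d"
  have "d \<bullet> k = norm h * norm d" unfolding k_def using dn by (simp add: power2_norm_eq_inner[symmetric] power2_eq_square)
  moreover have "norm k = norm h" unfolding k_def using dn by simp
  ultimately have "norm h * norm d \<le> norm h * (2 * Lf * norm h)" using dk[of k]
    by (simp add: power2_eq_square algebra_simps)
  then have "norm d \<le> 2 * Lf * norm h" using hn by simp
  then show ?thesis unfolding d_def .
qed

lemma g_cont: "continuous_on UNIV g"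
proof (rule lipschitz_on_continuous_on)
  show "(2 * Lf)-lipschitz_on UNIV g"
  proof (rule lipschitz_onI)
    fix x y :: "'n vec"
    have "norm (g (y + (x - y)) - g y) \<le> 2 * Lf * norm (x - y)" by (rule g_lip)
    then show "dist (g x) (g y) \<le> 2 * Lf * dist x y" by (simp add: dist_norm)
  qed (use Lf_pos in simp)
qed

lemma f_cont: "continuous_on UNIV f"
proof -
  have "\<And>x. isCont f x" using smooth unfolding L_smooth_def by (blast intro: has_derivative_continuous)
  then show ?thesis by (simp add: continuous_at_imp_continuous_on)
qed

lemma measD: "continuous_on UNIV h \<Longrightarrow> h \<in> borel_measurable D"
  using borel_measurable_continuous_onI measurable_cong_sets[OF D_sets refl] by blast

lemma int_Sx: "integrable D (\<lambda>S. S *v x)"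
  using integrable_bounded_linear[OF linear_mv ES_int] .

lemma E_Sx: "(\<integral>S. S *v x \<partial>D) = x"
proof -
  have "(\<integral>S. S *v x \<partial>D) = (\<integral>S. S \<partial>D) *v x"
    by (rule integral_bounded_linear[OF linear_mv ES_int])
  then show ?thesis using ES by simp
qed

lemma int_quad: "integrable D (\<lambda>S. (norm (S *v x))^2)"
proof -
  have "integrable D (\<lambda>S. x \<bullet> ((transpose S ** S) *v x))"
    using integrable_bounded_linear[OF linear_quad ESS_int] .
  then show ?thesis by (simp only: quad_StS)
qed

lemma Q_quad: "x \<bullet> (Q *v y) = (\<integral>S. (S *v x) \<bullet> (S *v y) \<partial>D)"
proof -
  have "x \<bullet> (Q *v y) = (\<integral>S. x \<bullet> ((transpose S ** S) *v y) \<partial>D)"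
    unfolding Q_def by (rule integral_bounded_linear[OF linear_quad ESS_int, symmetric])
  also have "\<dots> = (\<integral>S. (S *v x) \<bullet> (S *v y) \<partial>D)"
    by (rule Bochner_Integration.integral_cong)
       (simp_all del: transpose_matrix_vector add: matrix_vector_mul_assoc[symmetric] tdot2)
  finally show ?thesis .
qed

lemma Q_sym: "\<forall>x y. (Q *v x) \<bullet> y = x \<bullet> (Q *v y)"
proof (intro allI)
  fix x y
  have "(Q *v x) \<bullet> y = y \<bullet> (Q *v x)" by (simp add: inner_commute)
  also have "\<dots> = x \<bullet> (Q *v y)" unfolding Q_quad by (simp add: inner_commute)
  finally show "(Q *v x) \<bullet> y = x \<bullet> (Q *v y)" .
qed

lemma Q_norm: "x \<bullet> (Q *v x) = (\<integral>S. (norm (S *v x))^2 \<partial>D)"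
  unfolding Q_quad by (simp add: power2_norm_eq_inner)

lemma Q_ge: "(norm x)^2 \<le> x \<bullet> (Q *v x)"
proof -
  have i1: "integrable D (\<lambda>S. 2 * ((S *v x) \<bullet> x))"
    using int_Sx by (intro integrable_mult_right integrable_inner_left) 
  have "0 \<le> (\<integral>S. (norm (S *v x - x))^2 \<partial>D)" by simp
  also have "\<dots> = (\<integral>S. (norm (S *v x))^2 - 2 * ((S *v x) \<bullet> x) + (norm x)^2 \<partial>D)"
    by (rule Bochner_Integration.integral_cong)
       (simp_all add: power2_norm_eq_inner inner_diff_left inner_diff_right inner_commute)
  also have "\<dots> = (\<integral>S. (norm (S *v x))^2 \<partial>D) - (\<integral>S. 2 * ((S *v x) \<bullet> x) \<partial>D) + (norm x)^2"
    using int_quad[of x] i1 by (simp add: Bochner_Integration.integral_add Bochner_Integration.integral_diff D.prob_space)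
  also have "(\<integral>S. 2 * ((S *v x) \<bullet> x) \<partial>D) = 2 * (norm x)^2"
    using int_Sx E_Sx by (simp add: power2_norm_eq_inner)
  finally show ?thesis unfolding Q_norm by simp
qed

lemma muD_eq: "muD = lambda_min Q" unfolding muD_def mu_D_def Q_def ..

lemma muD_le: "muD * (norm x)^2 \<le> x \<bullet> (Q *v x)"
  unfolding muD_eq by (rule lmin_le(1)[OF Q_sym])

lemma muD_eig: "\<exists>v. v \<noteq> 0 \<and> Q *v v = muD *\<^sub>R v"
  using lmin_le(2)[OF Q_sym] unfolding muD_eq eigvals_def by auto

lemma muD_ge1: "1 \<le> muD"
proof -
  obtain v where v: "v \<noteq> 0" "Q *v v = muD *\<^sub>R v" using muD_eig by blast
  have "(norm v)^2 \<le> v \<bullet> (Q *v v)" by (rule Q_ge)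
  also have "\<dots> = muD * (norm v)^2" using v(2) by (simp add: power2_norm_eq_inner)
  finally show ?thesis using v(1) by simp
qed

lemma AE_Lm: "AE S in D. lambda_max (transpose S ** S) \<le> Lm"
proof -
  define Ls where "Ls = {L. AE S in D. lambda_max (transpose S ** S) \<le> L}"
  have Lm_eq: "Lm = Inf Ls" unfolding Lm_def L_S_max_def Ls_def ..
  have ne: "Ls \<noteq> {}" using Lmax_fin unfolding Ls_def by auto
  have nonneg: "0 \<le> L" if "L \<in> Ls" for L
  proof -
    have "AE S in D. 0 \<le> L" using that unfolding Ls_def mem_Collect_eq
      by eventually_elim (use lmax_StS_nonneg order_trans in blast)
    then show ?thesis by simp
  qed
  have bdd: "bdd_below Ls" using nonneg by (meson bdd_below.I)
  have "AE S in D. lambda_max (transpose S ** S) \<le> Lm + inverse (real (Suc n))" for n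
  proof -
    have "Inf Ls < Lm + inverse (real (Suc n))" using Lm_eq by simp
    then obtain L where L: "L \<in> Ls" "L < Lm + inverse (real (Suc n))"
      using cInf_lessD[OF ne] by blast
    then show ?thesis unfolding Ls_def by (auto elim: AE_mp)
  qed
  then have "AE S in D. \<forall>n. lambda_max (transpose S ** S) \<le> Lm + inverse (real (Suc n))"
    by (simp add: AE_all_countable)
  then show ?thesis
  proof eventually_elim
    case (elim S)
    show ?case
    proof (rule ccontr)
      assume "\<not> ?case"
      then obtain n where "inverse (real (Suc n)) < lambda_max (transpose S ** S) - Lm"
        using reals_Archimedean[of "lambda_max (transpose S ** S) - Lm"] by auto
      with elim show False by (smt (verit))
    qed
  qed
qed

lemma AE_bound: "AE S in D. \<forall>z. (norm (S *v z))^2 \<le> Lm * (norm z)^2"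
  using AE_Lm
proof eventually_elim
  case (elim S)
  show ?case
  proof
    fix z
    have "(norm (S *v z))^2 \<le> lambda_max (transpose S ** S) * (norm z)^2" by (rule lmax_StS)
    also have "\<dots> \<le> Lm * (norm z)^2" using elim by (simp add: mult_right_mono)
    finally show "(norm (S *v z))^2 \<le> Lm * (norm z)^2" .
  qed
qed

lemma muD_le_Lm: "muD \<le> Lm"
proof -
  obtain v where v: "v \<noteq> 0" "Q *v v = muD *\<^sub>R v" using muD_eig by blast
  have "muD * (norm v)^2 = v \<bullet> (Q *v v)" using v(2) by (simp add: power2_norm_eq_inner)
  also have "\<dots> = (\<integral>S. (norm (S *v v))^2 \<partial>D)" by (rule Q_norm)
  also have "\<dots> \<le> (\<integral>S. Lm * (norm v)^2 \<partial>D)"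
    by (rule integral_mono_AE) (use int_quad AE_bound in auto)
  also have "\<dots> = Lm * (norm v)^2" by (simp add: D.prob_space)
  finally show ?thesis using v(1) by simp
qed

lemma Lm_pos: "0 < Lm" using muD_ge1 muD_le_Lm by linarith

lemma f_meas: "(\<lambda>S. f (s + S *v v)) \<in> borel_measurable D"
proof (rule measD)
  have "continuous_on UNIV (\<lambda>S::'n mat. s + S *v v)"
    by (intro continuous_intros linear_continuous_on linear_mv)
  then show "continuous_on UNIV (\<lambda>S::'n mat. f (s + S *v v))"
    by (rule continuous_on_compose2[OF f_cont]) auto
qed

lemma f_int: "integrable D (\<lambda>S. f (s + S *v v))"
proof (rule Bochner_Integration.integrable_bound[OF _ f_meas])
  let ?b = "\<lambda>S. \<bar>finf\<bar> + \<bar>f s\<bar> + norm (g s) * norm (S *v v) + \<bar>Lf\<bar> / 2 * (norm (S *v v))^2"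
  show "integrable D ?b"
    by (intro Bochner_Integration.integrable_add integrable_mult_right integrable_norm int_Sx int_quad
        D.integrable_const)
  show "AE S in D. norm (f (s + S *v v)) \<le> norm (?b S)"
  proof (rule AE_I2)
    fix S
    have u: "f (s + S *v v) \<le> f s + g s \<bullet> (S *v v) + Lf / 2 * (norm (S *v v))^2" by (rule upper)
    have cs: "g s \<bullet> (S *v v) \<le> norm (g s) * norm (S *v v)" by (rule norm_cauchy_schwarz)
    have l: "finf \<le> f (s + S *v v)" by (rule finf_le)
    have p: "0 \<le> norm (g s) * norm (S *v v)" "Lf / 2 * (norm (S *v v))^2 \<le> \<bar>Lf\<bar> / 2 * (norm (S *v v))^2"
      by (auto intro: mult_right_mono)
    have q: "0 \<le> \<bar>Lf\<bar> / 2 * (norm (S *v v))^2" by simp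
    have "\<bar>f (s + S *v v)\<bar> \<le> ?b S" unfolding abs_le_iff
      using u cs l p q abs_ge_self[of finf] abs_ge_minus_self[of finf] abs_ge_self[of "f s"] abs_ge_zero[of "f s"]
      by linarith
    then have "norm (f (s + S *v v)) \<le> ?b S" by simp
    then show "norm (f (s + S *v v)) \<le> norm (?b S)" by simp
  qed
qed

lemma ft_eq: "f_tilde D f s x = (\<integral>S. f (s + S *v (x - s)) \<partial>D)"
  unfolding f_tilde_def f_sk_def ..

lemma ft_ge: "finf \<le> f_tilde D f s x"
proof -
  have "(\<integral>S. finf \<partial>D) \<le> (\<integral>S. f (s + S *v (x - s)) \<partial>D)"
    by (rule integral_mono[OF _ f_int]) (auto intro: finf_le)
  then show ?thesis unfolding ft_eq by (simp add: D.prob_space)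
qed

end

context setting begin
interpretation D: prob_space D by (rule D_prob)
lemma step_bound:
  assumes hA: "\<forall>z. (norm (A *v z))^2 \<le> Lm * (norm z)^2" and gp: "0 < \<gamma>"
  shows "(norm (x - \<gamma> *\<^sub>R (transpose A *v g (s + A *v (x - s))) - xs))^2
    \<le> (norm (x - xs))^2 - \<gamma> * muf * (norm (A *v (x - xs)))^2 + 2 * \<gamma> * (f (s + A *v (xs - s)) - finf)
       - 2 * \<gamma> * (1 - \<gamma> * Lf * Lm) * (f (s + A *v (x - s)) - finf)"
proof -
  have lin: "linear ((*v) A)" by simp
  define y where "y = s + A *v (x - s)"
  define d where "d = g y"
  define G where "G = transpose A *v d"
  define h where "h = x - xs"
  define fy where "fy = f y"
  define fx where "fx = f (s + A *v (xs - s))"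
  define ah where "ah = (norm (A *v h))^2"
  have e1: "(norm (x - \<gamma> *\<^sub>R G - xs))^2 = (norm h)^2 - 2 * \<gamma> * (G \<bullet> h) + \<gamma>^2 * (norm G)^2"
  proof -
    have "x - \<gamma> *\<^sub>R G - xs = h - \<gamma> *\<^sub>R G" unfolding h_def by simp
    then have "(norm (x - \<gamma> *\<^sub>R G - xs))^2 = (h - \<gamma> *\<^sub>R G) \<bullet> (h - \<gamma> *\<^sub>R G)"
      by (metis power2_norm_eq_inner)
    also have "\<dots> = h \<bullet> h - 2 * \<gamma> * (G \<bullet> h) + \<gamma>^2 * (G \<bullet> G)"
      by (simp add: inner_diff_left inner_diff_right inner_commute power2_eq_square algebra_simps)
    finally show ?thesis by (simp add: power2_norm_eq_inner)
  qed
  have e2: "G \<bullet> h = d \<bullet> (A *v h)" unfolding G_def by (simp del: transpose_matrix_vector add: transpose_dot)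
  have e3: "fy - fx + muf / 2 * ah \<le> G \<bullet> h"
  proof -
    have yk: "y + A *v (xs - x) = s + A *v (xs - s)"
    proof -
      have "(x - s) + (xs - x) = xs - s" by simp
      then have "A *v (x - s) + A *v (xs - x) = A *v (xs - s)" by (metis linear_add[OF lin])
      then show ?thesis unfolding y_def by (simp add: add.assoc)
    qed
    have ak: "A *v (xs - x) = - (A *v h)"
    proof -
      have "xs - x = - h" unfolding h_def by simp
      then show ?thesis by (simp add: linear_neg[OF lin])
    qed
    have "f y + g y \<bullet> (A *v (xs - x)) + muf / 2 * (norm (A *v (xs - x)))^2 \<le> f (y + A *v (xs - x))"
      by (rule lower)
    then have "f y + g y \<bullet> (A *v (xs - x)) + muf / 2 * (norm (A *v (xs - x)))^2 \<le> fx"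
      unfolding yk fx_def .
    then have "f y - g y \<bullet> (A *v h) + muf / 2 * (norm (A *v h))^2 \<le> fx"
      unfolding ak by simp
    then show ?thesis unfolding e2 fy_def ah_def d_def by simp
  qed
  have e4: "(norm G)^2 \<le> 2 * Lf * Lm * (fy - finf)"
  proof -
    define c where "c = 1 / (Lf * Lm)"
    have cp: "0 < c" unfolding c_def using Lf_pos Lm_pos by simp
    define k where "k = - c *\<^sub>R G"
    have "finf \<le> f (y + A *v k)" by (rule finf_le)
    also have "\<dots> \<le> fy + d \<bullet> (A *v k) + Lf / 2 * (norm (A *v k))^2" unfolding fy_def d_def by (rule upper)
    also have "d \<bullet> (A *v k) = G \<bullet> k" unfolding G_def by (simp del: transpose_matrix_vector add: transpose_dot)
    also have "\<dots> = - c * (norm G)^2" unfolding k_def by (simp add: power2_norm_eq_inner)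
    also have "Lf / 2 * (norm (A *v k))^2 \<le> Lf / 2 * (Lm * (norm k)^2)"
      using hA Lf_pos by (simp add: mult_left_mono)
    also have "Lf / 2 * (Lm * (norm k)^2) = c / 2 * (norm G)^2"
    proof -
      have nk: "norm k = c * norm G" unfolding k_def using cp by simp
      have lc: "Lf * Lm * c = 1" unfolding c_def using Lf_pos Lm_pos by simp
      have "Lf / 2 * (Lm * (norm k)^2) = (Lf * Lm * c) * (c / 2 * (norm G)^2)"
        unfolding nk by (simp add: power2_eq_square mult_ac)
      then show ?thesis using lc by simp
    qed
    finally have "finf \<le> fy - c / 2 * (norm G)^2" by simp
    then have "c * (norm G)^2 \<le> 2 * (fy - finf)" by simp
    then have "(Lf * Lm) * (c * (norm G)^2) \<le> (Lf * Lm) * (2 * (fy - finf))"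
      using Lf_pos Lm_pos by (simp add: mult_left_mono)
    moreover have "(Lf * Lm) * (c * (norm G)^2) = (norm G)^2"
    proof -
      have lc: "Lf * Lm * c = 1" unfolding c_def using Lf_pos Lm_pos by simp
      then show ?thesis by (metis mult.assoc mult_1)
    qed
    ultimately have "(norm G)^2 \<le> (Lf * Lm) * (2 * (fy - finf))" by linarith
    then show ?thesis by (simp add: mult_ac)
  qed
  have m3: "\<gamma> * (fy - fx + muf / 2 * ah) \<le> \<gamma> * (G \<bullet> h)" using e3 gp by (simp add: mult_left_mono)
  have m4: "\<gamma>^2 * (norm G)^2 \<le> \<gamma>^2 * (2 * Lf * Lm * (fy - finf))" using e4 by (simp add: mult_left_mono)
  have "(norm (x - \<gamma> *\<^sub>R G - xs))^2 \<le> (norm h)^2 - 2 * (\<gamma> * (fy - fx + muf / 2 * ah)) + \<gamma>^2 * (2 * Lf * Lm * (fy - finf))"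
    using e1 m3 m4 by linarith
  also have "\<dots> = (norm h)^2 - \<gamma> * muf * ah + 2 * \<gamma> * (fx - finf) - 2 * \<gamma> * (1 - \<gamma> * Lf * Lm) * (fy - finf)"
    by (simp add: power2_eq_square algebra_simps)
  finally show ?thesis unfolding G_def d_def y_def h_def fy_def fx_def ah_def .
qed


lemma K:
  assumes gp: "0 < \<gamma>" and gc: "\<gamma> * Lf * Lm \<le> 1"
    and xs: "\<forall>x. f_tilde D f s xs \<le> f_tilde D f s x"
  shows "(\<integral>\<^sup>+A. ennreal ((norm (x - \<gamma> *\<^sub>R (transpose A *v g (s + A *v (x - s))) - xs))^2) \<partial>D)
    \<le> ennreal ((1 - \<gamma> * muD * muf) * (norm (x - xs))^2 + 2 * \<gamma>^2 * Lf * Lm * (f_tilde D f s xs - finf))"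
proof -
  define c where "c = \<gamma> * Lf * Lm"
  define R where "R = (\<lambda>A::'n mat. (norm (x - xs))^2 - \<gamma> * muf * (norm (A *v (x - xs)))^2 + 2 * \<gamma> * (f (s + A *v (xs - s)) - finf)
       - 2 * \<gamma> * (1 - c) * (f (s + A *v (x - s)) - finf))"
  define \<phi> where "\<phi> = (\<lambda>A::'n mat. (norm (x - \<gamma> *\<^sub>R (transpose A *v g (s + A *v (x - s))) - xs))^2)"
  have AE1: "AE A in D. \<phi> A \<le> R A"
    using AE_bound
  proof eventually_elim
    case (elim A)
    show ?case unfolding \<phi>_def R_def c_def using step_bound[OF elim gp, of x xs] by simp
  qed
  have AE0: "AE A in D. 0 \<le> R A" using AE1
  proof eventually_elim
    case (elim A)
    have "0 \<le> \<phi> A" unfolding \<phi>_def by simp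
    then show ?case using elim by linarith
  qed
  have intR: "integrable D R" unfolding R_def
    by (intro Bochner_Integration.integrable_add Bochner_Integration.integrable_diff integrable_mult_right
        int_quad f_int D.integrable_const)
  have IR: "(\<integral>A. R A \<partial>D) = (norm (x - xs))^2 - \<gamma> * muf * (\<integral>A. (norm (A *v (x - xs)))^2 \<partial>D)
       + 2 * \<gamma> * (f_tilde D f s xs - finf) - 2 * \<gamma> * (1 - c) * (f_tilde D f s x - finf)"
    unfolding R_def ft_eq
    by (simp add: int_quad f_int D.prob_space Bochner_Integration.integral_add Bochner_Integration.integral_diff
        integrable_mult_right)
  have q: "muD * (norm (x - xs))^2 \<le> (\<integral>A. (norm (A *v (x - xs)))^2 \<partial>D)"
    using muD_le[of "x - xs"] Q_norm by simp
  have q2: "\<gamma> * muf * (muD * (norm (x - xs))^2) \<le> \<gamma> * muf * (\<integral>A. (norm (A *v (x - xs)))^2 \<partial>D)"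
    using q gp muf_pos by (simp add: mult_left_mono)
  have f2: "2 * \<gamma> * (1 - c) * (f_tilde D f s xs - finf) \<le> 2 * \<gamma> * (1 - c) * (f_tilde D f s x - finf)"
    using xs gp gc unfolding c_def by (intro mult_left_mono) auto
  have bnd: "(\<integral>A. R A \<partial>D) \<le> (1 - \<gamma> * muD * muf) * (norm (x - xs))^2 + 2 * \<gamma>^2 * Lf * Lm * (f_tilde D f s xs - finf)"
  proof -
    have "(\<integral>A. R A \<partial>D) \<le> (norm (x - xs))^2 - \<gamma> * muf * (muD * (norm (x - xs))^2)
       + 2 * \<gamma> * (f_tilde D f s xs - finf) - 2 * \<gamma> * (1 - c) * (f_tilde D f s xs - finf)"
      unfolding IR using q2 f2 by linarith
    also have "\<dots> = (1 - \<gamma> * muD * muf) * (norm (x - xs))^2 + 2 * \<gamma>^2 * Lf * Lm * (f_tilde D f s xs - finf)"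
      unfolding c_def by (simp add: power2_eq_square algebra_simps)
    finally show ?thesis .
  qed
  have "(\<integral>\<^sup>+A. ennreal (\<phi> A) \<partial>D) \<le> (\<integral>\<^sup>+A. ennreal (R A) \<partial>D)"
    by (rule nn_integral_mono_AE) (use AE1 in \<open>auto elim: AE_mp intro: ennreal_leI\<close>)
  also have "\<dots> = ennreal (\<integral>A. R A \<partial>D)" by (rule nn_integral_eq_integral[OF intR AE0])
  also have "\<dots> \<le> ennreal ((1 - \<gamma> * muD * muf) * (norm (x - xs))^2 + 2 * \<gamma>^2 * Lf * Lm * (f_tilde D f s xs - finf))"
    by (rule ennreal_leI[OF bnd])
  finally show ?thesis unfolding \<phi>_def .
qed

end


lemma mv_cont: "continuous_on UNIV (\<lambda>p::((real^'n^'m) \<times> (real^'n)). fst p *v snd p)"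
proof -
  have "(\<lambda>p::((real^'n^'m) \<times> (real^'n)). fst p *v snd p) = (\<lambda>p. \<chi> i. \<Sum>j\<in>UNIV. fst p $ i $ j * snd p $ j)"
    by (auto simp: matrix_vector_mult_def)
  moreover have "continuous_on UNIV (\<lambda>p::((real^'n^'m) \<times> (real^'n)). \<chi> i. \<Sum>j\<in>UNIV. fst p $ i $ j * snd p $ j)"
    by (intro continuous_intros)
  ultimately show ?thesis by metis
qed

lemma mv_cont2[continuous_intros]:
  "continuous_on S a \<Longrightarrow> continuous_on S b \<Longrightarrow> continuous_on S (\<lambda>x. (a x :: real^'n^'m) *v (b x :: real^'n))"
  using continuous_on_compose2[OF mv_cont continuous_on_Pair, of S a b] by auto

lemma tr_cont[continuous_intros]:
  "continuous_on S a \<Longrightarrow> continuous_on S (\<lambda>x. transpose (a x :: real^'n^'m))"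
  unfolding transpose_def by (intro continuous_intros)

lemma nn_distr':
  assumes T: "T \<in> measurable M N" and f: "f \<in> borel_measurable N"
  shows "integral\<^sup>N (distr M N T) f = (\<integral>\<^sup>+x. f (T x) \<partial>M)"
proof -
  have "f \<in> borel_measurable (distr M N T)" using f by (subst measurable_cong_sets[OF sets_distr refl])
  then show ?thesis by (rule nn_integral_distr[OF T])
qed

lemma dsgd_cong: "(\<forall>i<t. Ss i = Ss' i) \<Longrightarrow> dsgd g \<gamma> s x0 Ss t = dsgd g \<gamma> s x0 Ss' t"
  by (induction t) auto

definition stepf :: "(('n::finite) vec \<Rightarrow> 'n vec) \<Rightarrow> real \<Rightarrow> 'n vec \<Rightarrow> 'n vec \<times> 'n mat \<Rightarrow> 'n vec" where
  "stepf g \<gamma> s p = fst p - \<gamma> *\<^sub>R (transpose (snd p) *v g (s + snd p *v (fst p - s)))"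

lemma stepf_cont:
  fixes g :: "('n::finite) vec \<Rightarrow> 'n vec"
  assumes gc: "continuous_on UNIV g"
  shows "continuous_on UNIV (stepf g \<gamma> s)"
proof -
  have c1: "continuous_on UNIV (\<lambda>p::('n vec \<times> 'n mat). s + snd p *v (fst p - s))"
    by (intro continuous_intros)
  have c2: "continuous_on UNIV (\<lambda>p::('n vec \<times> 'n mat). g (s + snd p *v (fst p - s)))"
    using continuous_on_compose2[OF gc c1] by simp
  show ?thesis unfolding stepf_def by (intro continuous_intros c2)
qed

lemma stepf_meas: "continuous_on UNIV g \<Longrightarrow> stepf g \<gamma> s \<in> borel_measurable (borel \<Otimes>\<^sub>M borel)"
  unfolding borel_prod by (intro borel_measurable_continuous_onI stepf_cont)

lemma dsgd_Suc: "dsgd g \<gamma> s x0 Ss (Suc t) = stepf g \<gamma> s (dsgd g \<gamma> s x0 Ss t, Ss t)"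
  by (simp add: stepf_def)

lemma dsgd_meas:
  assumes gc: "continuous_on UNIV g"
  shows "t \<le> N \<Longrightarrow> (\<lambda>y. dsgd g \<gamma> s x0 y t) \<in> borel_measurable (PiM {..<N} (\<lambda>_. borel))"
proof (induction t)
  case 0 then show ?case by simp
next
  case (Suc t)
  then have tN: "t \<in> {..<N}" by simp
  have pm: "(\<lambda>y. (dsgd g \<gamma> s x0 y t, y t)) \<in> measurable (PiM {..<N} (\<lambda>_. borel)) (borel \<Otimes>\<^sub>M borel)"
    using Suc by (intro measurable_Pair measurable_component_singleton[OF tN]) auto
  have eq: "(\<lambda>y. dsgd g \<gamma> s x0 y (Suc t)) = (\<lambda>y. stepf g \<gamma> s (dsgd g \<gamma> s x0 y t, y t))"
    by (simp only: dsgd_Suc)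
  from measurable_compose[OF pm stepf_meas[OF gc, of \<gamma> s]] show ?case unfolding eq .
qed

theorem theorem2:
  fixes f :: "('n::finite) vec \<Rightarrow> real" and g :: "'n vec \<Rightarrow> 'n vec"
    and s x0 xstar :: "'n vec"
    and D :: "'n mat measure"
    and M :: "'w measure" and S :: "nat \<Rightarrow> 'w \<Rightarrow> 'n mat"
    and Lf muf \<gamma> :: real and T :: nat
  assumes smooth: "L_smooth Lf f g"
    and sconv: "strongly_convex muf f g"
    and D_prob: "prob_space D" and D_sets: "sets D = sets borel"
    and ES_int: "integrable D (\<lambda>S. S)" and ES: "(\<integral>S. S \<partial>D) = mat 1"
    and ESS_int: "integrable D (\<lambda>S. transpose S ** S)"
    and Lmax_fin: "\<exists>L. AE S in D. lambda_max (transpose S ** S) \<le> L"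
    and xstar_min: "\<forall>x. f_tilde D f s xstar \<le> f_tilde D f s x"
    and gamma_pos: "0 < \<gamma>" and gamma_le: "\<gamma> \<le> 1 / (Lf * L_S_max D)"
    and M_prob: "prob_space M"
    and S_rv: "\<And>t. S t \<in> borel_measurable M"
    and S_indep: "prob_space.indep_vars M (\<lambda>_. borel) S UNIV"
    and S_distr: "\<And>t. distr M borel (S t) = D"
  shows "(\<integral>\<^sup>+\<omega>. ennreal ((norm (dsgd g \<gamma> s x0 (\<lambda>t. S t \<omega>) T - xstar))\<^sup>2) \<partial>M)
     \<le> ennreal ((1 - \<gamma> * mu_D D * muf) ^ T * (norm (x0 - xstar))\<^sup>2
          + 2 * \<gamma> * Lf * L_S_max D / (muf * mu_D D)
            * (Inf (range (f_tilde D f s)) - Inf (range f)))"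
proof -
  interpret M: prob_space M by (rule M_prob)
  interpret D: prob_space D by (rule D_prob)
  interpret st: setting f g s D Lf muf
    by unfold_locales (fact smooth sconv D_prob D_sets ES_int ES ESS_int Lmax_fin)+
  have gc: "continuous_on UNIV g" by (rule st.g_cont)
  have Lm_def': "st.Lm = L_S_max D" by (simp add: st.Lm_def)
  have muD_def': "st.muD = mu_D D" by (simp add: st.muD_def)
  define X where "X t \<omega> = dsgd g \<gamma> s x0 (\<lambda>t. S t \<omega>) t" for t \<omega>
  have XSuc: "X (Suc t) \<omega> = stepf g \<gamma> s (X t \<omega>, S t \<omega>)" for t \<omega>
    unfolding X_def by (simp only: dsgd_Suc)
  have Xmeas: "X t \<in> borel_measurable M" for t
  proof (induction t)
    case 0 then show ?case by (simp add: X_def)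
  next
    case (Suc t)
    have pm: "(\<lambda>\<omega>. (X t \<omega>, S t \<omega>)) \<in> measurable M (borel \<Otimes>\<^sub>M borel)"
      using Suc S_rv by (intro measurable_Pair) auto
    have eq: "X (Suc t) = (\<lambda>\<omega>. stepf g \<gamma> s (X t \<omega>, S t \<omega>))" using XSuc by (simp add: fun_eq_iff)
    show ?case unfolding eq by (rule measurable_compose[OF pm stepf_meas[OF gc]])
  qed
  have sD: "sets D = sets (borel :: 'n mat measure)" by (rule D_sets)
  have fub: "(\<integral>\<^sup>+\<omega>. \<phi> (X t \<omega>, S t \<omega>) \<partial>M) = (\<integral>\<^sup>+\<omega>. (\<integral>\<^sup>+A. \<phi> (X t \<omega>, A) \<partial>D) \<partial>M)"
    if phi: "\<phi> \<in> borel_measurable (borel \<Otimes>\<^sub>M borel)" for \<phi> t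
  proof -
    define N1 where "N1 = PiM {..<t} (\<lambda>_. borel :: 'n mat measure)"
    define N2 where "N2 = PiM {t} (\<lambda>_. borel :: 'n mat measure)"
    define R1 where "R1 = (\<lambda>\<omega>. restrict (\<lambda>i. S i \<omega>) {..<t})"
    define R2 where "R2 = (\<lambda>\<omega>. restrict (\<lambda>i. S i \<omega>) {t})"
    define F where "F = (\<lambda>y. dsgd g \<gamma> s x0 y t)"
    have i1: "M.indep_var N1 R1 N2 R2"
      unfolding N1_def N2_def R1_def R2_def by (rule M.indep_var_restrict[OF S_indep]) auto
    have m1: "F \<in> borel_measurable N1" unfolding F_def N1_def by (rule dsgd_meas[OF gc]) simp
    have m2: "(\<lambda>y. y t) \<in> measurable N2 borel" unfolding N2_def
      by (rule measurable_component_singleton) simp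
    have R1m: "R1 \<in> measurable M N1" unfolding R1_def N1_def by (intro measurable_restrict) (simp add: S_rv)
    have R2m: "R2 \<in> measurable M N2" unfolding R2_def N2_def by (intro measurable_restrict) (simp add: S_rv)
    have eqd: "distr M N1 R1 \<Otimes>\<^sub>M distr M N2 R2 = distr M (N1 \<Otimes>\<^sub>M N2) (\<lambda>\<omega>. (R1 \<omega>, R2 \<omega>))"
      using i1 M.indep_var_distribution_eq by blast
    define P1 where "P1 = distr M N1 R1"
    define P2 where "P2 = distr M N2 R2"
    interpret P2: prob_space P2 unfolding P2_def by (rule M.prob_space_distr[OF R2m])
    define \<psi> where "\<psi> = (\<lambda>p. \<phi> (F (fst p), snd p t))"
    have psim: "\<psi> \<in> borel_measurable (N1 \<Otimes>\<^sub>M N2)" unfolding \<psi>_def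
      by (rule measurable_compose[OF measurable_Pair[OF measurable_compose[OF measurable_fst m1]
          measurable_compose[OF measurable_snd m2]] phi])
    have psi1: "\<psi> \<in> borel_measurable (P1 \<Otimes>\<^sub>M P2)" unfolding P1_def P2_def
      using psim by (subst measurable_cong_sets[OF sets_pair_measure_cong[OF sets_distr sets_distr] refl])
    have XR: "X t \<omega> = F (R1 \<omega>)" "S t \<omega> = R2 \<omega> t" for \<omega>
      unfolding X_def F_def R1_def R2_def by (auto intro: dsgd_cong)
    have D2: "distr P2 borel (\<lambda>y. y t) = D"
    proof -
      have "distr P2 borel (\<lambda>y. y t) = distr M borel ((\<lambda>y. y t) \<circ> R2)"
        unfolding P2_def by (rule distr_distr[OF m2 R2m])
      also have "(\<lambda>y. y t) \<circ> R2 = S t" unfolding R2_def by (auto simp: fun_eq_iff)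
      finally show ?thesis using S_distr by simp
    qed
    have m2': "(\<lambda>y. y t) \<in> measurable P2 borel" unfolding P2_def using m2 by simp
    have inner: "(\<integral>\<^sup>+y2. \<psi> (y1, y2) \<partial>P2) = (\<integral>\<^sup>+A. \<phi> (F y1, A) \<partial>D)" for y1
    proof -
      have pm: "(\<lambda>A. \<phi> (F y1, A)) \<in> borel_measurable borel"
        by (rule measurable_Pair2[OF phi]) simp
      have pm': "(\<lambda>A. \<phi> (F y1, A)) \<in> borel_measurable (distr P2 borel (\<lambda>y. y t))"
        using pm by (subst measurable_cong_sets[OF sets_distr refl])
      have "(\<integral>\<^sup>+A. \<phi> (F y1, A) \<partial>D) = (\<integral>\<^sup>+A. \<phi> (F y1, A) \<partial>(distr P2 borel (\<lambda>y. y t)))"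
        by (simp only: D2)
      also have "\<dots> = (\<integral>\<^sup>+y2. \<phi> (F y1, y2 t) \<partial>P2)" by (rule nn_distr'[OF m2' pm])
      finally show ?thesis unfolding \<psi>_def by simp
    qed
    have phiD: "(\<lambda>p. \<phi> (F (fst p), snd p)) \<in> borel_measurable (N1 \<Otimes>\<^sub>M D)"
    proof -
      have "(\<lambda>p. \<phi> (F (fst p), snd p)) \<in> borel_measurable (N1 \<Otimes>\<^sub>M borel)"
        by (rule measurable_compose[OF measurable_Pair[OF measurable_compose[OF measurable_fst m1]
          measurable_snd] phi])
      then show ?thesis by (subst measurable_cong_sets[OF sets_pair_measure_cong[OF refl sD] refl])
    qed
    have im: "(\<lambda>y1. \<integral>\<^sup>+A. \<phi> (F y1, A) \<partial>D) \<in> borel_measurable N1"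
      using D.borel_measurable_nn_integral_fst[OF phiD] by simp
    have "(\<integral>\<^sup>+\<omega>. \<phi> (X t \<omega>, S t \<omega>) \<partial>M) = (\<integral>\<^sup>+\<omega>. \<psi> (R1 \<omega>, R2 \<omega>) \<partial>M)"
      unfolding \<psi>_def XR by simp
    also have "\<dots> = (\<integral>\<^sup>+p. \<psi> p \<partial>(distr M (N1 \<Otimes>\<^sub>M N2) (\<lambda>\<omega>. (R1 \<omega>, R2 \<omega>))))"
      by (rule nn_distr'[OF measurable_Pair[OF R1m R2m] psim, symmetric])
    also have "\<dots> = (\<integral>\<^sup>+p. \<psi> p \<partial>(P1 \<Otimes>\<^sub>M P2))" unfolding P1_def P2_def eqd ..
    also have "\<dots> = (\<integral>\<^sup>+y1. (\<integral>\<^sup>+y2. \<psi> (y1, y2) \<partial>P2) \<partial>P1)"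
      by (rule P2.nn_integral_fst[OF psi1, symmetric])
    also have "\<dots> = (\<integral>\<^sup>+y1. (\<integral>\<^sup>+A. \<phi> (F y1, A) \<partial>D) \<partial>P1)" by (simp only: inner)
    also have "\<dots> = (\<integral>\<^sup>+\<omega>. (\<integral>\<^sup>+A. \<phi> (F (R1 \<omega>), A) \<partial>D) \<partial>M)"
      unfolding P1_def by (rule nn_distr'[OF R1m im])
    also have "\<dots> = (\<integral>\<^sup>+\<omega>. (\<integral>\<^sup>+A. \<phi> (X t \<omega>, A) \<partial>D) \<partial>M)" unfolding XR ..
    finally show ?thesis .
  qed
  define \<rho> where "\<rho> = 1 - \<gamma> * st.muD * muf"
  define \<Delta> where "\<Delta> = f_tilde D f s xstar - st.finf"
  define C where "C = 2 * \<gamma>^2 * Lf * st.Lm * \<Delta>"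
  define a0 where "a0 = (norm (x0 - xstar))^2"
  define E where "E t = (\<integral>\<^sup>+\<omega>. ennreal ((norm (X t \<omega> - xstar))^2) \<partial>M)" for t
  have LfLm: "0 < Lf * st.Lm" using st.Lf_pos st.Lm_pos by simp
  have gLL: "\<gamma> * Lf * st.Lm \<le> 1"
  proof -
    have "\<gamma> \<le> 1 / (Lf * st.Lm)" using gamma_le Lm_def' by simp
    then have "\<gamma> * (Lf * st.Lm) \<le> 1" using LfLm by (simp add: le_divide_eq)
    then show ?thesis by (simp add: mult.assoc)
  qed
  have rho0: "0 \<le> \<rho>"
  proof -
    have "st.muD * muf \<le> st.Lm * Lf"
      using st.muD_le_Lm st.muf_le_Lf st.muD_ge1 st.muf_pos by (intro mult_mono) auto
    then have "\<gamma> * (st.muD * muf) \<le> \<gamma> * (st.Lm * Lf)" using gamma_pos by (simp add: mult_left_mono)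
    then show ?thesis unfolding \<rho>_def using gLL by (simp add: mult_ac)
  qed
  have gmm: "0 < \<gamma> * st.muD * muf" using gamma_pos st.muD_ge1 st.muf_pos by simp
  have Delta0: "0 \<le> \<Delta>" unfolding \<Delta>_def using st.ft_ge[of xstar] by simp
  have C0: "0 \<le> C" unfolding C_def using Delta0 st.Lf_pos st.Lm_pos by simp
  define \<phi> where "\<phi> = (\<lambda>p. ennreal ((norm (stepf g \<gamma> s p - xstar))^2))"
  have phim: "\<phi> \<in> borel_measurable (borel \<Otimes>\<^sub>M borel)"
  proof -
    have "(\<lambda>p. (norm (stepf g \<gamma> s p - xstar))^2) \<in> borel_measurable (borel \<Otimes>\<^sub>M borel)"
      unfolding borel_prod
      by (intro borel_measurable_continuous_onI continuous_intros stepf_cont[OF gc])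
    then show ?thesis unfolding \<phi>_def by (rule measurable_compose[OF _ measurable_ennreal])
  qed
  have K': "(\<integral>\<^sup>+A. \<phi> (x, A) \<partial>D) \<le> ennreal (\<rho> * (norm (x - xstar))^2 + C)" for x
    unfolding \<phi>_def stepf_def fst_conv snd_conv \<rho>_def C_def \<Delta>_def
    by (rule st.K[OF gamma_pos gLL xstar_min])
  have Em: "(\<lambda>\<omega>. ennreal ((norm (X t \<omega> - xstar))^2)) \<in> borel_measurable M" for t
    using Xmeas[of t] by measurable
  have step: "E (Suc t) \<le> ennreal \<rho> * E t + ennreal C" for t
  proof -
    have "E (Suc t) = (\<integral>\<^sup>+\<omega>. \<phi> (X t \<omega>, S t \<omega>) \<partial>M)" unfolding E_def XSuc \<phi>_def ..
    also have "\<dots> = (\<integral>\<^sup>+\<omega>. (\<integral>\<^sup>+A. \<phi> (X t \<omega>, A) \<partial>D) \<partial>M)" by (rule fub[OF phim])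
    also have "\<dots> \<le> (\<integral>\<^sup>+\<omega>. ennreal (\<rho> * (norm (X t \<omega> - xstar))^2 + C) \<partial>M)"
      by (rule nn_integral_mono) (rule K')
    also have "\<dots> = (\<integral>\<^sup>+\<omega>. ennreal \<rho> * ennreal ((norm (X t \<omega> - xstar))^2) + ennreal C \<partial>M)"
      using rho0 C0 by (intro nn_integral_cong) (simp add: ennreal_mult)
    also have "\<dots> = ennreal \<rho> * E t + ennreal C"
      unfolding E_def using Em[of t]
      by (simp add: nn_integral_add nn_integral_cmult M.emeasure_space_1)
    finally show ?thesis .
  qed
  have bound: "E t \<le> ennreal (\<rho>^t * a0 + C / (1 - \<rho>))" for t
  proof (induction t)
    case 0
    have "E 0 = ennreal a0" unfolding E_def X_def a0_def by (simp add: M.emeasure_space_1)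
    also have "\<dots> \<le> ennreal (\<rho>^0 * a0 + C / (1 - \<rho>))"
      using C0 gmm unfolding \<rho>_def by (intro ennreal_leI) simp
    finally show ?case .
  next
    case (Suc t)
    have B0: "0 \<le> \<rho>^t * a0 + C / (1 - \<rho>)"
      using rho0 C0 gmm unfolding a0_def by (intro add_nonneg_nonneg) (auto simp: \<rho>_def)
    have "E (Suc t) \<le> ennreal \<rho> * E t + ennreal C" by (rule step)
    also have "\<dots> \<le> ennreal \<rho> * ennreal (\<rho>^t * a0 + C / (1 - \<rho>)) + ennreal C"
      using Suc.IH by (intro add_right_mono mult_left_mono) auto
    also have "\<dots> = ennreal (\<rho> * (\<rho>^t * a0 + C / (1 - \<rho>)) + C)"
      using rho0 B0 C0 by (simp add: ennreal_mult)
    also have "\<rho> * (\<rho>^t * a0 + C / (1 - \<rho>)) + C = \<rho>^Suc t * a0 + C / (1 - \<rho>)"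
    proof -
      have ne: "1 - \<rho> \<noteq> 0" using gmm unfolding \<rho>_def by linarith
      show ?thesis using ne by (simp add: field_simps)
    qed
    finally show ?case .
  qed
  have fin: "C / (1 - \<rho>) = 2 * \<gamma> * Lf * L_S_max D / (muf * mu_D D)
            * (Inf (range (f_tilde D f s)) - Inf (range f))"
  proof -
    have "Inf (range (f_tilde D f s)) = f_tilde D f s xstar"
      by (rule cInf_eq_minimum) (use xstar_min in auto)
    then have "Inf (range (f_tilde D f s)) - Inf (range f) = \<Delta>" unfolding \<Delta>_def st.finf_def by simp
    moreover have "1 - \<rho> = \<gamma> * st.muD * muf" unfolding \<rho>_def by simp
    ultimately have "C / (1 - \<rho>) = 2 * \<gamma>^2 * Lf * st.Lm * \<Delta> / (\<gamma> * st.muD * muf)"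
      and "Inf (range (f_tilde D f s)) - Inf (range f) = \<Delta>" unfolding C_def by simp_all
    then show ?thesis unfolding Lm_def'[symmetric] muD_def'[symmetric]
      using gamma_pos st.muD_ge1 st.muf_pos by (simp add: field_simps power2_eq_square)
  qed
  show ?thesis using bound[of T] unfolding E_def X_def fin[symmetric] \<rho>_def a0_def muD_def' .
qed

end
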